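(* The number of occurrences of the endhered pattern $21$ (resp. $12$) in a uniformly random matching of size $n$ converges in distribution, as $n\to\infty$, to a Poisson law with parameter $1/2$; precisely, for every fixed $k\ge0$, $$\frac{a_{n,k}}{(2n-1)!!}\to\frac{e^{-1/2}}{2^k k!}\qquad(n\to\infty),$$ where $a_{n,k}$ is the number of matchings of size $n$ with exactly $k$ occurrences of the pattern.
   Context: A matching of size $n$ is a set of $n$ arcs $(a,b)$ with $1\le a<b\le 2n$ such that each point of $\{1,\dots,2n\}$ belongs to exactly one arc; there are $(2n-1)!!$ of them. An occurrence of the endhered pattern $21$ in a matching is a pair of arcs of the form $(i+1,j+2),(i+2,j+1)$; an occurrence of $12$ is a pair of arcs of the form $(i+1,j+1),(i+2,j+2)$. The number of occurrences is the number of such pairs. *)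

theory Defs
  imports Complex_Main
begin

definition is_matching :: "nat \<Rightarrow> (nat \<times> nat) set \<Rightarrow> bool" where
  "is_matching n M \<longleftrightarrow>
     (\<forall>(a,b)\<in>M. 1 \<le> a \<and> a < b \<and> b \<le> 2*n) \<and>
     (\<forall>x\<in>{1..2*n}. \<exists>!e. e \<in> M \<and> (fst e = x \<or> snd e = x))"

definition matchings :: "nat \<Rightarrow> (nat \<times> nat) set set" where
  "matchings n = {M. is_matching n M}"

text \<open>Occurrences of the pattern 21: pairs of arcs (i+1,j+2),(i+2,j+1);
  indexed by (a,b) = (i+1,j+1), i.e. arcs (a,b+1) and (a+1,b).\<close>
definition occ21 :: "(nat \<times> nat) set \<Rightarrow> nat" where
  "occ21 M = card {(a,b). (a, b+1) \<in> M \<and> (a+1, b) \<in> M}"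

definition occ12 :: "(nat \<times> nat) set \<Rightarrow> nat" where
  "occ12 M = card {(a,b). (a, b) \<in> M \<and> (a+1, b+1) \<in> M}"

definition a_nk :: "((nat \<times> nat) set \<Rightarrow> nat) \<Rightarrow> nat \<Rightarrow> nat \<Rightarrow> nat" where
  "a_nk occ n k = card {M \<in> matchings n. occ M = k}"

definition odd_dfact :: "nat \<Rightarrow> nat" where
  "odd_dfact n = (\<Prod>i\<in>{1..n}. 2*i - 1)"

end

theory Submission
  imports Defs "HOL-Analysis.Analysis"
begin

definition disj_arcs :: "(nat \<times> nat) set \<Rightarrow> bool" where
  "disj_arcs M \<longleftrightarrow> (\<forall>a b c d. (a,b)\<in>M \<longrightarrow> (c,d)\<in>M \<longrightarrow> (a = c \<or> a = d \<or> b = c \<or> b = d) \<longrightarrow> a = c \<and> b = d)"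

definition arcs_ok :: "nat \<Rightarrow> (nat \<times> nat) set \<Rightarrow> bool" where
  "arcs_ok n M \<longleftrightarrow> (\<forall>a b. (a,b)\<in>M \<longrightarrow> 1 \<le> a \<and> a < b \<and> b \<le> 2*n)"

definition covers :: "nat \<Rightarrow> (nat \<times> nat) set \<Rightarrow> bool" where
  "covers n M \<longleftrightarrow> (\<forall>x. 1 \<le> x \<longrightarrow> x \<le> 2*n \<longrightarrow> (\<exists>y. (x,y)\<in>M \<or> (y,x)\<in>M))"

lemma is_matching_iff:
  "is_matching n M \<longleftrightarrow> arcs_ok n M \<and> disj_arcs M \<and> covers n M"
proof
  assume H: "is_matching n M"
  have B: "\<forall>(a,b)\<in>M. 1 \<le> a \<and> a < b \<and> b \<le> 2*n" using H unfolding is_matching_def by blast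
  have U: "\<forall>x\<in>{1..2*n}. \<exists>!e. e \<in> M \<and> (fst e = x \<or> snd e = x)" using H unfolding is_matching_def by blast
  have U': "e = e'" if "x\<in>{1..2*n}" "e\<in>M" "fst e = x \<or> snd e = x" "e'\<in>M" "fst e' = x \<or> snd e' = x" for x e e'
    using U[rule_format, OF that(1)] that(2-5) by blast
  have D: "a = c \<and> b = d" if "(a,b)\<in>M" "(c,d)\<in>M" "a = c \<or> a = d \<or> b = c \<or> b = d" for a b c d
  proof -
    have ba: "1 \<le> a" "a < b" "b \<le> 2*n" "1 \<le> c" "c < d" "d \<le> 2*n" using B that(1,2) by auto
    from that(3) show ?thesis
    proof (elim disjE)
      assume "a = c" then show ?thesis using U'[of a "(a,b)" "(c,d)"] ba that(1,2) by simp
    next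
      assume "a = d" then show ?thesis using U'[of a "(a,b)" "(c,d)"] ba that(1,2) by simp
    next
      assume "b = c" then show ?thesis using U'[of b "(a,b)" "(c,d)"] ba that(1,2) by simp
    next
      assume "b = d" then show ?thesis using U'[of b "(a,b)" "(c,d)"] ba that(1,2) by simp
    qed
  qed
  have C: "covers n M" unfolding covers_def
  proof (intro allI impI)
    fix x assume "1 \<le> x" "x \<le> 2*n"
    then have xin: "x \<in> {1..2*n}" by simp
    have "\<exists>e. e \<in> M \<and> (fst e = x \<or> snd e = x)" using U[rule_format, OF xin] by (meson ex1_implies_ex)
    then obtain e where "e \<in> M" "fst e = x \<or> snd e = x" by blast
    then show "\<exists>y. (x,y)\<in>M \<or> (y,x)\<in>M" by (cases e) auto
  qed
  have "arcs_ok n M" using B unfolding arcs_ok_def by auto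
  moreover have "disj_arcs M" unfolding disj_arcs_def using D by blast
  ultimately show "arcs_ok n M \<and> disj_arcs M \<and> covers n M" using C by simp
next
  assume H: "arcs_ok n M \<and> disj_arcs M \<and> covers n M"
  have D: "a = c \<and> b = d" if "(a,b)\<in>M" "(c,d)\<in>M" "a = c \<or> a = d \<or> b = c \<or> b = d" for a b c d
    using H that unfolding disj_arcs_def by blast
  have "\<exists>!e. e \<in> M \<and> (fst e = x \<or> snd e = x)" if xr: "x \<in> {1..2*n}" for x
  proof -
    obtain y where "(x,y)\<in>M \<or> (y,x)\<in>M" using H xr unfolding covers_def by auto
    then have "\<exists>e. e\<in>M \<and> (fst e = x \<or> snd e = x)" by (metis fst_conv snd_conv)
    then obtain e where e: "e \<in> M" "fst e = x \<or> snd e = x" by blast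
    have uq: "e' = e" if "e' \<in> M" "fst e' = x \<or> snd e' = x" for e'
    proof -
      obtain p q where pq: "e = (p,q)" by force
      obtain p' q' where pq': "e' = (p',q')" by force
      have "p' = p \<or> p' = q \<or> q' = p \<or> q' = q" using that(2) e(2) pq pq' by auto
      then show ?thesis using D[of p' q' p q] that(1) e(1) pq pq' by simp
    qed
    show ?thesis
    proof (rule ex1I[of _ e])
      show "e \<in> M \<and> (fst e = x \<or> snd e = x)" using e by simp
      fix y assume "y \<in> M \<and> (fst y = x \<or> snd y = x)"
      then show "y = e" using uq by blast
    qed
  qed
  moreover have "\<forall>(a,b)\<in>M. 1 \<le> a \<and> a < b \<and> b \<le> 2*n" using H unfolding arcs_ok_def by auto
  ultimately show "is_matching n M" unfolding is_matching_def by simp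
qed


definition sh :: "nat \<Rightarrow> nat \<Rightarrow> nat" where "sh a x = (if x < a then x else Suc x)"
definition un :: "nat \<Rightarrow> nat \<Rightarrow> nat" where "un a x = (if x < a then x else x - 1)"
definition shp :: "nat \<Rightarrow> nat \<times> nat \<Rightarrow> nat \<times> nat" where "shp a e = (sh a (fst e), sh a (snd e))"
definition ins :: "nat \<Rightarrow> nat \<Rightarrow> (nat \<times> nat) set \<Rightarrow> (nat \<times> nat) set" where
  "ins n a M = shp a ` M \<union> {(a, 2*n)}"

lemma sh_neq: "sh a u \<noteq> a" by (simp add: sh_def)
lemma sh_inj_iff[simp]: "sh a u = sh a v \<longleftrightarrow> u = v" by (auto simp: sh_def)
lemma sh_less_iff[simp]: "sh a u < sh a v \<longleftrightarrow> u < v" by (auto simp: sh_def)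
lemma sh_un: "z \<noteq> a \<Longrightarrow> sh a (un a z) = z" by (auto simp: sh_def un_def)
lemma sh_ge: "u \<le> sh a u \<and> sh a u \<le> Suc u" by (auto simp: sh_def)

lemma mem_ins: "(x,y) \<in> ins n a M \<longleftrightarrow> (x = a \<and> y = 2*n) \<or> (\<exists>u v. (u,v)\<in>M \<and> x = sh a u \<and> y = sh a v)"
  unfolding ins_def shp_def by force

lemma pre_ins: "{(u,v). (sh a u, sh a v) \<in> ins n a M} = M"
proof -
  have "(sh a u, sh a v) \<in> ins n a M \<longleftrightarrow> (u,v) \<in> M" for u v
    unfolding mem_ins using sh_neq[of a u] by auto
  then show ?thesis by auto
qed

lemma arcs_okD: "arcs_ok n M \<Longrightarrow> (a,b) \<in> M \<Longrightarrow> 1 \<le> a \<and> a < b \<and> b \<le> 2*n"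
  unfolding arcs_ok_def by blast
lemma disj_arcsD: "disj_arcs M \<Longrightarrow> (a,b)\<in>M \<Longrightarrow> (c,d)\<in>M \<Longrightarrow> (a = c \<or> a = d \<or> b = c \<or> b = d) \<Longrightarrow> a = c \<and> b = d"
  unfolding disj_arcs_def by blast
lemma coversD: "covers n M \<Longrightarrow> 1 \<le> x \<Longrightarrow> x \<le> 2*n \<Longrightarrow> \<exists>y. (x,y)\<in>M \<or> (y,x)\<in>M"
  unfolding covers_def by blast

lemma ins_matching:
  assumes M: "is_matching (n-1) M" and n: "1 \<le> n" and a: "1 \<le> a" "a \<le> 2*n-1"
  shows "is_matching n (ins n a M)"
proof -
  have Ma: "arcs_ok (n-1) M" and Md: "disj_arcs M" and Mc: "covers (n-1) M" using M is_matching_iff by auto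
  have A: "arcs_ok n (ins n a M)" unfolding arcs_ok_def
  proof (intro allI impI)
    fix x y assume "(x,y) \<in> ins n a M"
    then consider "x = a" "y = 2*n" | u v where "(u,v)\<in>M" "x = sh a u" "y = sh a v" unfolding mem_ins by blast
    then show "1 \<le> x \<and> x < y \<and> y \<le> 2*n"
    proof cases
      case 1 then show ?thesis using a by simp
    next
      case 2
      have "1 \<le> u \<and> u < v \<and> v \<le> 2*(n-1)" using arcs_okD[OF Ma 2(1)] .
      then show ?thesis using 2 sh_ge[of u a] sh_ge[of v a] n by auto
    qed
  qed
  have D: "disj_arcs (ins n a M)" unfolding disj_arcs_def
  proof (intro allI impI)
    fix x y z w assume xy: "(x,y) \<in> ins n a M" and zw: "(z,w) \<in> ins n a M" and sh: "x = z \<or> x = w \<or> y = z \<or> y = w"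
    have bnd: "sh a u \<le> 2*n - 1 \<and> sh a v \<le> 2*n - 1" if "(u,v)\<in>M" for u v
      using arcs_okD[OF Ma that] sh_ge[of v a] sh_less_iff[of a u v] n by linarith
    from xy consider "x = a" "y = 2*n" | u v where "(u,v)\<in>M" "x = sh a u" "y = sh a v" unfolding mem_ins by blast
    then show "x = z \<and> y = w"
    proof cases
      case 1
      from zw consider "z = a" "w = 2*n" | u v where "(u,v)\<in>M" "z = sh a u" "w = sh a v" unfolding mem_ins by blast
      then show ?thesis
      proof cases
        case 1 then show ?thesis using \<open>x = a\<close> \<open>y = 2*n\<close> by simp
      next
        case 2
        have "sh a u \<noteq> a" "sh a v \<noteq> a" by (rule sh_neq)+
        moreover have "sh a u \<le> 2*n-1" "sh a v \<le> 2*n-1" using bnd[OF 2(1)] by auto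
        ultimately show ?thesis using sh 1 2 n by auto
      qed
    next
      case xy2: 2
      from zw consider "z = a" "w = 2*n" | u' v' where "(u',v')\<in>M" "z = sh a u'" "w = sh a v'" unfolding mem_ins by blast
      then show ?thesis
      proof cases
        case 1
        have "sh a u \<noteq> a" "sh a v \<noteq> a" by (rule sh_neq)+
        moreover have "sh a u \<le> 2*n-1" "sh a v \<le> 2*n-1" using bnd[OF xy2(1)] by auto
        ultimately show ?thesis using sh 1 xy2 n by auto
      next
        case 2
        have "u = u' \<or> u = v' \<or> v = u' \<or> v = v'" using sh xy2 2 by auto
        then have "u = u' \<and> v = v'" using disj_arcsD[OF Md xy2(1) 2(1)] by blast
        then show ?thesis using xy2 2 by simp
      qed
    qed
  qed
  have C: "covers n (ins n a M)" unfolding covers_def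
  proof (intro allI impI)
    fix z assume z: "1 \<le> z" "z \<le> 2*n"
    show "\<exists>y. (z,y) \<in> ins n a M \<or> (y,z) \<in> ins n a M"
    proof (cases "z = a \<or> z = 2*n")
      case True then show ?thesis unfolding mem_ins by blast
    next
      case False
      have "1 \<le> un a z" "un a z \<le> 2*(n-1)" using z False a unfolding un_def by auto
      then obtain y where "(un a z, y) \<in> M \<or> (y, un a z) \<in> M" using coversD[OF Mc] by blast
      then have "(sh a (un a z), sh a y) \<in> ins n a M \<or> (sh a y, sh a (un a z)) \<in> ins n a M"
        unfolding mem_ins by blast
      then show ?thesis using sh_un[of z a] False by auto
    qed
  qed
  show ?thesis using A D C is_matching_iff by blast
qed


lemma matching_last:
  assumes M: "is_matching n M" and n: "1 \<le> n"
  shows "\<exists>a. (a, 2*n) \<in> M \<and> 1 \<le> a \<and> a \<le> 2*n-1"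
proof -
  have Ma: "arcs_ok n M" and Mc: "covers n M" using M is_matching_iff by auto
  obtain y where "(2*n,y)\<in>M \<or> (y,2*n)\<in>M" using coversD[OF Mc, of "2*n"] n by auto
  then have yM: "(y,2*n)\<in>M" using arcs_okD[OF Ma, of "2*n" y] by auto
  moreover have "1 \<le> y \<and> y \<le> 2*n-1" using arcs_okD[OF Ma yM] by auto
  ultimately show ?thesis by blast
qed

lemma ins_decomp:
  assumes M: "is_matching n M" and n: "1 \<le> n" and aM: "(a, 2*n) \<in> M"
  shows "is_matching (n-1) {(u,v). (sh a u, sh a v) \<in> M} \<and> M = ins n a {(u,v). (sh a u, sh a v) \<in> M}"
proof -
  define M' where "M' = {(u,v). (sh a u, sh a v) \<in> M}"
  have Ma: "arcs_ok n M" and Md: "disj_arcs M" and Mc: "covers n M" using M is_matching_iff by auto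
  have a: "1 \<le> a" "a < 2*n" using arcs_okD[OF Ma aM] by auto
  have noa: "x \<noteq> a \<and> y \<noteq> a \<and> x \<noteq> 2*n \<and> y \<noteq> 2*n" if "(x,y) \<in> M" "(x,y) \<noteq> (a,2*n)" for x y
  proof -
    have "\<not> (x = a \<or> x = 2*n \<or> y = a \<or> y = 2*n)"
    proof
      assume "x = a \<or> x = 2*n \<or> y = a \<or> y = 2*n"
      then have "x = a \<and> y = 2*n" by (rule disj_arcsD[OF Md that(1) aM])
      with that(2) show False by simp
    qed
    then show ?thesis by simp
  qed
  have A: "arcs_ok (n-1) M'" unfolding arcs_ok_def M'_def
  proof (intro allI impI)
    fix u v assume "(u,v) \<in> {(u,v). (sh a u, sh a v) \<in> M}"
    then have uv: "(sh a u, sh a v) \<in> M" by simp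
    have ne: "(sh a u, sh a v) \<noteq> (a, 2*n)" using sh_neq[of a u] by auto
    have "1 \<le> sh a u" "sh a u < sh a v" "sh a v \<le> 2*n" using arcs_okD[OF Ma uv] by auto
    moreover have "sh a v \<noteq> 2*n" using noa[OF uv ne] by simp
    ultimately have h: "1 \<le> sh a u" "sh a u < sh a v" "sh a v \<le> 2*n - 1" by auto
    have "u < v" using h(2) by simp
    moreover have "1 \<le> u"
    proof (rule ccontr)
      assume "\<not> 1 \<le> u"
      then have "u = 0" by simp
      then have "sh a u = 0" using a unfolding sh_def by simp
      then show False using h(1) by simp
    qed
    moreover have "v \<le> 2*(n-1)"
    proof (cases "v < a")
      case True then show ?thesis using a by linarith
    next
      case False then have "sh a v = Suc v" unfolding sh_def by simp
      then show ?thesis using h(3) by linarith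
    qed
    ultimately show "1 \<le> u \<and> u < v \<and> v \<le> 2*(n-1)" by simp
  qed
  have D: "disj_arcs M'" unfolding disj_arcs_def M'_def
  proof (intro allI impI)
    fix u v u' v'
    assume 1: "(u,v) \<in> {(u,v). (sh a u, sh a v) \<in> M}" and 2: "(u',v') \<in> {(u,v). (sh a u, sh a v) \<in> M}"
      and s: "u = u' \<or> u = v' \<or> v = u' \<or> v = v'"
    have "sh a u = sh a u' \<or> sh a u = sh a v' \<or> sh a v = sh a u' \<or> sh a v = sh a v'" using s by (elim disjE) simp_all
    then have "sh a u = sh a u' \<and> sh a v = sh a v'" using disj_arcsD[OF Md, of "sh a u" "sh a v" "sh a u'" "sh a v'"] 1 2 by simp
    then show "u = u' \<and> v = v'" by simp
  qed
  have C: "covers (n-1) M'" unfolding covers_def M'_def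
  proof (intro allI impI)
    fix z assume z: "1 \<le> z" "z \<le> 2*(n-1)"
    have "1 \<le> sh a z" "sh a z \<le> 2*n" using z sh_ge[of z a] n by auto
    then obtain y where y: "(sh a z, y) \<in> M \<or> (y, sh a z) \<in> M" using coversD[OF Mc] by blast
    have "y \<noteq> a"
    proof
      assume ya: "y = a"
      show False using y
      proof
        assume "(sh a z, y) \<in> M"
        then have "(sh a z, a) \<in> M" using ya by simp
        then have "sh a z = a \<and> a = 2*n" using disj_arcsD[OF Md _ aM] by blast
        then show False using a by simp
      next
        assume "(y, sh a z) \<in> M"
        then have "(a, sh a z) \<in> M" using ya by simp
        then have "sh a z = 2*n" using disj_arcsD[OF Md _ aM] by blast
        moreover have "sh a z \<le> 2*n-1" using z sh_ge[of z a] by linarith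
        ultimately show False using n by linarith
      qed
    qed
    then have shy: "sh a (un a y) = y" by (rule sh_un)
    from y have "(z, un a y) \<in> {(u,v). (sh a u, sh a v) \<in> M} \<or> (un a y, z) \<in> {(u,v). (sh a u, sh a v) \<in> M}"
      using shy by simp
    then show "\<exists>y. (z, y) \<in> {(u,v). (sh a u, sh a v) \<in> M} \<or> (y, z) \<in> {(u,v). (sh a u, sh a v) \<in> M}"
      by blast
  qed
  have E: "M = ins n a M'"
  proof
    show "ins n a M' \<subseteq> M" unfolding ins_def shp_def M'_def using aM by auto
    show "M \<subseteq> ins n a M'"
    proof
      fix e assume e: "e \<in> M"
      obtain x y where xy: "e = (x,y)" by force
      show "e \<in> ins n a M'"
      proof (cases "e = (a, 2*n)")
        case True then show ?thesis unfolding ins_def by simp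
      next
        case False
        then have "x \<noteq> a" "y \<noteq> a" using noa e xy by auto
        then have "sh a (un a x) = x" "sh a (un a y) = y" by (simp_all add: sh_un)
        then have "(un a x, un a y) \<in> M'" using e xy unfolding M'_def by simp
        then show ?thesis unfolding mem_ins xy using \<open>sh a (un a x) = x\<close> \<open>sh a (un a y) = y\<close> by metis
      qed
    qed
  qed
  show ?thesis using A D C E is_matching_iff unfolding M'_def by blast
qed

lemma ins_last:
  assumes M: "is_matching (n-1) M" and n: "1 \<le> n" and "(b, 2*n) \<in> ins n a M"
  shows "b = a"
proof -
  have Ma: "arcs_ok (n-1) M" using M is_matching_iff by auto
  show ?thesis
  proof (rule ccontr)
    assume "b \<noteq> a"
    then obtain u v where uv: "(u,v) \<in> M" "2*n = sh a v" using assms(3) unfolding mem_ins by blast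
    have "v \<le> 2*(n-1)" using arcs_okD[OF Ma uv(1)] by simp
    then show False using uv(2) sh_ge[of v a] n by linarith
  qed
qed

lemma ins_inj:
  assumes "is_matching (n-1) M1" "is_matching (n-1) M2" "1 \<le> n" "ins n a1 M1 = ins n a2 M2"
  shows "a1 = a2 \<and> M1 = M2"
proof -
  have "(a1, 2*n) \<in> ins n a1 M1" by (simp add: ins_def)
  then have "(a1, 2*n) \<in> ins n a2 M2" using assms(4) by simp
  then have "a1 = a2" using ins_last[OF assms(2,3)] by blast
  have "M1 = {(u,v). (sh a1 u, sh a1 v) \<in> ins n a1 M1}" by (rule pre_ins[symmetric])
  also have "\<dots> = {(u,v). (sh a2 u, sh a2 v) \<in> ins n a2 M2}" using assms(4) \<open>a1 = a2\<close> by simp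
  also have "\<dots> = M2" by (rule pre_ins)
  finally have "M1 = M2" .
  moreover note \<open>a1 = a2\<close>
  ultimately show ?thesis by simp
qed

lemma matchings_finite: "finite (matchings n)"
proof -
  have "matchings n \<subseteq> Pow ({1..2*n} \<times> {1..2*n})"
  proof
    fix M assume "M \<in> matchings n"
    then have "arcs_ok n M" unfolding matchings_def using is_matching_iff by auto
    then have "e \<in> {1..2*n} \<times> {1..2*n}" if "e \<in> M" for e
      using arcs_okD[of n M "fst e" "snd e"] that by (simp add: mem_Times_iff)
    then show "M \<in> Pow ({1..2*n} \<times> {1..2*n})" by blast
  qed
  then show ?thesis by (rule finite_subset) simp
qed

lemma matchings_image:
  assumes n: "1 \<le> n"
  shows "matchings n = (\<lambda>(M,a). ins n a M) ` (matchings (n-1) \<times> {1..2*n-1})"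
proof
  show "(\<lambda>(M,a). ins n a M) ` (matchings (n-1) \<times> {1..2*n-1}) \<subseteq> matchings n"
  proof (rule image_subsetI)
    fix p assume "p \<in> matchings (n-1) \<times> {1..2*n-1}"
    then obtain M a where p: "p = (M,a)" "is_matching (n-1) M" "1 \<le> a" "a \<le> 2*n-1"
      unfolding matchings_def by (cases p) auto
    show "(\<lambda>(M,a). ins n a M) p \<in> matchings n"
      unfolding matchings_def using ins_matching[OF p(2) n p(3,4)] p(1) by simp
  qed
  show "matchings n \<subseteq> (\<lambda>(M,a). ins n a M) ` (matchings (n-1) \<times> {1..2*n-1})"
  proof
    fix M assume "M \<in> matchings n"
    then have M: "is_matching n M" unfolding matchings_def by simp
    obtain a where a: "(a, 2*n) \<in> M" "1 \<le> a" "a \<le> 2*n-1" using matching_last[OF M n] by blast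
    define M' where "M' = {(u,v). (sh a u, sh a v) \<in> M}"
    have "is_matching (n-1) M'" "M = ins n a M'" using ins_decomp[OF M n a(1)] unfolding M'_def by auto
    then have "(M',a) \<in> matchings (n-1) \<times> {1..2*n-1}" "M = (\<lambda>(M,a). ins n a M) (M',a)"
      unfolding matchings_def using a by auto
    then show "M \<in> (\<lambda>(M,a). ins n a M) ` (matchings (n-1) \<times> {1..2*n-1})" by blast
  qed
qed

lemma sum_matchings_step:
  assumes n: "1 \<le> n"
  shows "(\<Sum>M\<in>matchings n. g M) = (\<Sum>M\<in>matchings (n-1). \<Sum>a\<in>{1..2*n-1}. g (ins n a M))"
proof -
  have inj: "inj_on (\<lambda>(M,a). ins n a M) (matchings (n-1) \<times> {1..2*n-1})"
  proof (rule inj_onI)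
    fix p q assume p: "p \<in> matchings (n-1) \<times> {1..2*n-1}" and q: "q \<in> matchings (n-1) \<times> {1..2*n-1}"
      and e: "(\<lambda>(M,a). ins n a M) p = (\<lambda>(M,a). ins n a M) q"
    obtain M1 a1 where p1: "p = (M1,a1)" by force
    obtain M2 a2 where q1: "q = (M2,a2)" by force
    have "is_matching (n-1) M1" "is_matching (n-1) M2" using p q p1 q1 unfolding matchings_def by auto
    moreover have "ins n a1 M1 = ins n a2 M2" using e p1 q1 by simp
    ultimately show "p = q" using ins_inj[of n M1 M2 a1 a2] n p1 q1 by simp
  qed
  have "(\<Sum>M\<in>matchings n. g M) = (\<Sum>p\<in>matchings (n-1) \<times> {1..2*n-1}. g ((\<lambda>(M,a). ins n a M) p))"
    unfolding matchings_image[OF n] by (rule sum.reindex[OF inj, unfolded comp_def])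
  also have "\<dots> = (\<Sum>M\<in>matchings (n-1). \<Sum>a\<in>{1..2*n-1}. g (ins n a M))"
    by (simp add: sum.cartesian_product split_def)
  finally show ?thesis .
qed


definition touchU :: "(nat \<times> nat) set \<Rightarrow> bool" where
  "touchU Q \<longleftrightarrow> (\<forall>e1\<in>Q. \<forall>e2\<in>Q. \<forall>c. (fst e1 = c \<or> snd e1 = c) \<longrightarrow> (fst e2 = c \<or> snd e2 = c) \<longrightarrow> e1 = e2)"

lemma touchUD: "touchU Q \<Longrightarrow> e1 \<in> Q \<Longrightarrow> e2 \<in> Q \<Longrightarrow> fst e1 = c \<or> snd e1 = c \<Longrightarrow> fst e2 = c \<or> snd e2 = c \<Longrightarrow> e1 = e2"
  unfolding touchU_def by blast

lemma card_filter_touch: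
  assumes fin: "finite Q" and U: "touchU Q"
  shows "card {e1\<in>Q. fst e1 \<noteq> c \<and> snd e1 \<noteq> c} = (if c \<in> fst ` Q \<union> snd ` Q then card Q - 1 else card Q)"
proof (cases "c \<in> fst ` Q \<union> snd ` Q")
  case False
  then have "{e1\<in>Q. fst e1 \<noteq> c \<and> snd e1 \<noteq> c} = Q" by force
  then show ?thesis using False by simp
next
  case True
  then obtain e0 where e0: "e0 \<in> Q" "fst e0 = c \<or> snd e0 = c" by force
  have "{e1\<in>Q. fst e1 \<noteq> c \<and> snd e1 \<noteq> c} = Q - {e0}"
  proof
    show "{e1\<in>Q. fst e1 \<noteq> c \<and> snd e1 \<noteq> c} \<subseteq> Q - {e0}" using e0 by auto
    show "Q - {e0} \<subseteq> {e1\<in>Q. fst e1 \<noteq> c \<and> snd e1 \<noteq> c}"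
    proof
      fix e1 assume e1: "e1 \<in> Q - {e0}"
      have "\<not> (fst e1 = c \<or> snd e1 = c)"
      proof
        assume "fst e1 = c \<or> snd e1 = c"
        then have "e1 = e0" using touchUD[OF U _ e0(1) _ e0(2)] e1 by blast
        then show False using e1 by simp
      qed
      then show "e1 \<in> {e1\<in>Q. fst e1 \<noteq> c \<and> snd e1 \<noteq> c}" using e1 by simp
    qed
  qed
  then show ?thesis using True e0(1) fin by simp
qed

lemma card_glue:
  assumes fin: "finite Q" and U: "touchU Q" and D: "\<forall>e1\<in>Q. fst e1 \<noteq> snd e1"
  shows "card (Suc ` (fst ` Q \<union> snd ` Q)) = 2 * card Q"
proof -
  have i1: "inj_on fst Q"
  proof (rule inj_onI)
    fix e1 e2 assume "e1 \<in> Q" "e2 \<in> Q" "fst e1 = fst e2"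
    then show "e1 = e2" using touchUD[OF U, of e1 e2 "fst e1"] by simp
  qed
  have i2: "inj_on snd Q"
  proof (rule inj_onI)
    fix e1 e2 assume "e1 \<in> Q" "e2 \<in> Q" "snd e1 = snd e2"
    then show "e1 = e2" using touchUD[OF U, of e1 e2 "snd e1"] by simp
  qed
  have dj: "fst ` Q \<inter> snd ` Q = {}"
  proof (rule ccontr)
    assume "fst ` Q \<inter> snd ` Q \<noteq> {}"
    then obtain e1 e2 where oo: "e1 \<in> Q" "e2 \<in> Q" "fst e1 = snd e2" by blast
    then have "e1 = e2" using touchUD[OF U, of e1 e2 "fst e1"] by simp
    then show False using D oo by auto
  qed
  have "card (Suc ` (fst ` Q \<union> snd ` Q)) = card (fst ` Q \<union> snd ` Q)" by (simp add: card_image)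
  also have "\<dots> = card (fst ` Q) + card (snd ` Q)" using dj fin by (simp add: card_Un_disjoint)
  also have "\<dots> = 2 * card Q" using card_image[OF i1] card_image[OF i2] by simp
  finally show ?thesis .
qed

lemma sh_succ: "1 \<le> a \<Longrightarrow> sh a x' = Suc (sh a x) \<Longrightarrow> x' = Suc x \<and> x \<noteq> a - 1"
  unfolding sh_def by (cases "x < a"; cases "x' < a") auto

lemma sh_Suc: "1 \<le> a \<Longrightarrow> x \<noteq> a - 1 \<Longrightarrow> sh a (Suc x) = Suc (sh a x)"
  unfolding sh_def by auto

lemma shp_inj: "inj (shp a)"
  unfolding inj_def shp_def by (auto simp: prod_eq_iff)

lemma arcs_partner_unique:
  assumes "disj_arcs M" "(x,y) \<in> M" "(x',y) \<in> M" shows "x = x'"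
  using disj_arcsD[OF assms] by simp

lemma arcs_partner_unique2:
  assumes "disj_arcs M" "(x,y) \<in> M" "(x,y') \<in> M" shows "y = y'"
  using disj_arcsD[OF assms] by simp

lemma matching_sub: "is_matching n M \<Longrightarrow> M \<subseteq> {1..2*n} \<times> {1..2*n}"
proof
  fix e assume "is_matching n M" "e \<in> M"
  then have "arcs_ok n M" "e \<in> M" using is_matching_iff by auto
  then show "e \<in> {1..2*n} \<times> {1..2*n}" using arcs_okD[of n M "fst e" "snd e"] by (simp add: mem_Times_iff)
qed

lemma matching_finite: "is_matching n M \<Longrightarrow> finite M"
proof -
  assume "is_matching n M"
  from matching_sub[OF this] show "finite M" by (rule finite_subset) (intro finite_SigmaI finite_atLeastAtMost)
qed

definition O12 :: "(nat \<times> nat) set \<Rightarrow> (nat \<times> nat) set" where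
  "O12 M = {(p,q). (p,q) \<in> M \<and> (p+1,q+1) \<in> M}"

lemma occ12_O12: "occ12 M = card (O12 M)"
  unfolding occ12_def O12_def by simp

lemma O12_props:
  assumes M: "is_matching n M"
  shows "finite (O12 M) \<and> touchU (O12 M) \<and> (\<forall>e1\<in>O12 M. fst e1 \<noteq> snd e1) \<and> fst ` O12 M \<union> snd ` O12 M \<subseteq> {1..2*n}"
proof -
  have Ma: "arcs_ok n M" and Md: "disj_arcs M" using M is_matching_iff by auto
  have sub: "O12 M \<subseteq> M" unfolding O12_def by auto
  have f: "finite (O12 M)" using finite_subset[OF sub matching_finite[OF M]] .
  have U: "touchU (O12 M)" unfolding touchU_def
  proof (intro ballI allI impI)
    fix e1 e2 c assume e1: "e1 \<in> O12 M" and e2: "e2 \<in> O12 M" and t: "fst e1 = c \<or> snd e1 = c" and t': "fst e2 = c \<or> snd e2 = c"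
    obtain p q where pq: "e1 = (p,q)" by force
    obtain p' q' where pq': "e2 = (p',q')" by force
    have "(p,q) \<in> M" "(p',q') \<in> M" using e1 e2 pq pq' sub by auto
    moreover have "p = p' \<or> p = q' \<or> q = p' \<or> q = q'" using t t' pq pq' by auto
    ultimately have "p = p' \<and> q = q'" using disj_arcsD[OF Md] by blast
    then show "e1 = e2" using pq pq' by simp
  qed
  have D: "\<forall>e1\<in>O12 M. fst e1 \<noteq> snd e1"
  proof
    fix e1 assume "e1 \<in> O12 M"
    then have "e1 \<in> M" using sub by auto
    then show "fst e1 \<noteq> snd e1" using arcs_okD[OF Ma, of "fst e1" "snd e1"] by simp
  qed
  have B: "fst ` O12 M \<union> snd ` O12 M \<subseteq> {1..2*n}"
  proof
    fix z assume "z \<in> fst ` O12 M \<union> snd ` O12 M"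
    then obtain e1 where "e1 \<in> M" "z = fst e1 \<or> z = snd e1" using sub by blast
    then show "z \<in> {1..2*n}" using arcs_okD[OF Ma, of "fst e1" "snd e1"] by auto
  qed
  show ?thesis using f U D B by blast
qed

lemma occ12_le: "is_matching n M \<Longrightarrow> occ12 M \<le> n"
proof -
  assume M: "is_matching n M"
  note P = O12_props[OF M]
  have "2 * card (O12 M) = card (Suc ` (fst ` O12 M \<union> snd ` O12 M))" using card_glue P by simp
  also have "\<dots> = card (fst ` O12 M \<union> snd ` O12 M)" by (simp add: card_image)
  also have "\<dots> \<le> card {1..2*n}" using P by (intro card_mono) auto
  finally show ?thesis unfolding occ12_O12 by simp
qed


lemma O12_ins:
  assumes M: "is_matching (n-1) M" and n: "2 \<le> n" and a: "1 \<le> a" "a \<le> 2*n-1"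
  shows "O12 (ins n a M) = shp a ` {e\<in>O12 M. fst e \<noteq> a - 1 \<and> snd e \<noteq> a - 1}
           \<union> (if (a - 1, 2*n - 2) \<in> M then {(a - 1, 2*n - 1)} else {})"
proof -
  have N: "is_matching n (ins n a M)" using ins_matching[OF M _ a] n by simp
  have Na: "arcs_ok n (ins n a M)" using N is_matching_iff by auto
  have Ma: "arcs_ok (n-1) M" using M is_matching_iff by auto
  show ?thesis
  proof
    show "O12 (ins n a M) \<subseteq> shp a ` {e\<in>O12 M. fst e \<noteq> a - 1 \<and> snd e \<noteq> a - 1}
           \<union> (if (a - 1, 2*n - 2) \<in> M then {(a - 1, 2*n - 1)} else {})"
    proof
      fix e assume e: "e \<in> O12 (ins n a M)"
      obtain p q where pq: "e = (p,q)" by force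
      have e1: "(p,q) \<in> ins n a M" and e2: "(Suc p, Suc q) \<in> ins n a M" using e pq unfolding O12_def by auto
      show "e \<in> shp a ` {e\<in>O12 M. fst e \<noteq> a - 1 \<and> snd e \<noteq> a - 1}
           \<union> (if (a - 1, 2*n - 2) \<in> M then {(a - 1, 2*n - 1)} else {})"
      proof (cases "(p,q) = (a, 2*n)")
        case True
        then show ?thesis using arcs_okD[OF Na e2] by auto
      next
        case F1: False
        then obtain u v where uv: "(u,v) \<in> M" "p = sh a u" "q = sh a v" using e1 unfolding mem_ins by blast
        show ?thesis
        proof (cases "(Suc p, Suc q) = (a, 2*n)")
          case True
          have "u = a - 1" using uv(2) True unfolding sh_def by (cases "u < a") auto
          moreover have "v = 2*n - 2"
          proof -
            have "v \<le> 2*(n-1)" using arcs_okD[OF Ma uv(1)] by simp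
            then show ?thesis using uv(3) True a unfolding sh_def by (cases "v < a") auto
          qed
          ultimately have "(a - 1, 2*n - 2) \<in> M" using uv(1) by simp
          moreover have "e = (a - 1, 2*n - 1)" using True pq by auto
          ultimately show ?thesis by simp
        next
          case False
          then obtain u' v' where uv': "(u',v') \<in> M" "Suc p = sh a u'" "Suc q = sh a v'" using e2 unfolding mem_ins by blast
          have "sh a u' = Suc (sh a u)" using uv uv' by simp
          then have "u' = Suc u \<and> u \<noteq> a - 1" by (rule sh_succ[OF a(1)])
          moreover have "sh a v' = Suc (sh a v)" using uv uv' by simp
          then have "v' = Suc v \<and> v \<noteq> a - 1" by (rule sh_succ[OF a(1)])
          ultimately have "(u,v) \<in> {e\<in>O12 M. fst e \<noteq> a - 1 \<and> snd e \<noteq> a - 1}"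
            using uv(1) uv'(1) unfolding O12_def by simp
          moreover have "e = shp a (u,v)" using pq uv unfolding shp_def by simp
          ultimately show ?thesis by blast
        qed
      qed
    qed
    show "shp a ` {e\<in>O12 M. fst e \<noteq> a - 1 \<and> snd e \<noteq> a - 1}
           \<union> (if (a - 1, 2*n - 2) \<in> M then {(a - 1, 2*n - 1)} else {}) \<subseteq> O12 (ins n a M)"
    proof
      fix e assume "e \<in> shp a ` {e\<in>O12 M. fst e \<noteq> a - 1 \<and> snd e \<noteq> a - 1}
           \<union> (if (a - 1, 2*n - 2) \<in> M then {(a - 1, 2*n - 1)} else {})"
      then consider u v where "(u,v) \<in> O12 M" "u \<noteq> a - 1" "v \<noteq> a - 1" "e = shp a (u,v)"
        | "(a - 1, 2*n - 2) \<in> M" "e = (a - 1, 2*n - 1)"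
      proof -
        assume c1: "\<And>u v. (u,v) \<in> O12 M \<Longrightarrow> u \<noteq> a - 1 \<Longrightarrow> v \<noteq> a - 1 \<Longrightarrow> e = shp a (u,v) \<Longrightarrow> thesis"
          and c2: "(a - 1, 2*n - 2) \<in> M \<Longrightarrow> e = (a - 1, 2*n - 1) \<Longrightarrow> thesis"
        show thesis
        proof (cases "e \<in> shp a ` {e\<in>O12 M. fst e \<noteq> a - 1 \<and> snd e \<noteq> a - 1}")
          case True
          then obtain x where x: "x \<in> O12 M" "fst x \<noteq> a - 1" "snd x \<noteq> a - 1" "e = shp a x" by blast
          show thesis using c1[of "fst x" "snd x"] x by simp
        next
          case False
          then have "(a - 1, 2*n - 2) \<in> M \<and> e = (a - 1, 2*n - 1)" using \<open>e \<in> _\<close>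
            by (simp split: if_splits)
          then show thesis using c2 by blast
        qed
      qed
      then show "e \<in> O12 (ins n a M)"
      proof cases
        case 1
        have "(u,v) \<in> M" "(Suc u, Suc v) \<in> M" using 1(1) unfolding O12_def by auto
        then have "(sh a u, sh a v) \<in> ins n a M" "(sh a (Suc u), sh a (Suc v)) \<in> ins n a M"
          unfolding mem_ins by blast+
        moreover have "sh a (Suc u) = Suc (sh a u)" "sh a (Suc v) = Suc (sh a v)"
          using sh_Suc[OF a(1)] 1(2,3) by auto
        ultimately show ?thesis using 1(4) unfolding O12_def shp_def by simp
      next
        case 2
        have "a - 1 < 2*n - 2" using arcs_okD[OF Ma 2(1)] by simp
        then have "sh a (a - 1) = a - 1" "sh a (2*n - 2) = 2*n - 1" using a unfolding sh_def by auto
        then have "(a - 1, 2*n - 1) \<in> ins n a M" using 2(1) unfolding mem_ins by (intro disjI2 exI[of _ "a - 1"] exI[of _ "2*n - 2"]) simp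
        moreover have "(Suc (a - 1), Suc (2*n - 1)) \<in> ins n a M" using a n unfolding ins_def by simp
        ultimately show ?thesis using 2(2) unfolding O12_def by simp
      qed
    qed
  qed
qed


lemma sh_eq_pred: "1 \<le> a \<Longrightarrow> sh a u = a - 1 \<Longrightarrow> u = a - 1"
  unfolding sh_def by (cases "u < a") auto

lemma card_new_part:
  assumes fin: "finite A" and nA: "\<And>z. z \<in> A \<Longrightarrow> z \<noteq> w"
  shows "card (A \<union> (if P then {w} else {})) = card A + (if P then 1 else 0)"
proof -
  have "w \<notin> A" using nA by blast
  then show ?thesis using fin by (cases P) auto
qed

lemma occ12_step:
  assumes M: "is_matching (n-1) M" and n: "2 \<le> n"
  shows "\<exists>G c0. G \<subseteq> {1..2*n-1} \<and> c0 \<in> {1..2*n-1} \<and> c0 \<notin> G \<and> card G = 2 * occ12 M \<and>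
     (\<forall>a\<in>{1..2*n-1}. occ12 (ins n a M) = (if a \<in> G then occ12 M - 1 else if a = c0 then occ12 M + 1 else occ12 M))"
proof -
  define Q where "Q = O12 M"
  define G where "G = Suc ` (fst ` Q \<union> snd ` Q)"
  have Ma: "arcs_ok (n-1) M" and Md: "disj_arcs M" using M is_matching_iff by auto
  note P = O12_props[OF M, folded Q_def]
  have fin: "finite Q" and U: "touchU Q" and Dq: "\<forall>e\<in>Q. fst e \<noteq> snd e" and B: "fst ` Q \<union> snd ` Q \<subseteq> {1..2*(n-1)}"
    using P by auto
  have n1: "1 \<le> n - 1" using n by simp
  obtain x where x: "(x, 2*(n-1)) \<in> M" "1 \<le> x" "x \<le> 2*(n-1) - 1" using matching_last[OF M n1] by blast
  define c0 where "c0 = Suc x"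
  have G_sub: "G \<subseteq> {1..2*n-1}"
  proof
    fix z assume "z \<in> G"
    then obtain y where "y \<in> fst ` Q \<union> snd ` Q" "z = Suc y" unfolding G_def by blast
    then show "z \<in> {1..2*n-1}" using B n by force
  qed
  have c0_in: "c0 \<in> {1..2*n-1}" unfolding c0_def using x n by auto
  have x_not: "x \<notin> fst ` Q \<union> snd ` Q"
  proof
    assume "x \<in> fst ` Q \<union> snd ` Q"
    then obtain e where e: "e \<in> Q" "x = fst e \<or> x = snd e" by blast
    obtain p q where pq: "e = (p,q)" by force
    have e1: "(p,q) \<in> M" and e2: "(Suc p, Suc q) \<in> M" using e(1) pq unfolding Q_def O12_def by auto
    from e(2) show False
    proof
      assume "x = fst e"
      then have "p = x" using pq by simp
      then have "q = 2*(n-1)" using arcs_partner_unique2[OF Md _ x(1)] e1 by simp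
      then show False using arcs_okD[OF Ma e2] by simp
    next
      assume "x = snd e"
      then have qx: "q = x" using pq by simp
      then have "p = x \<and> q = 2*(n-1)" using disj_arcsD[OF Md e1 x(1)] by simp
      then show False using arcs_okD[OF Ma e1] qx by simp
    qed
  qed
  have c0_not: "c0 \<notin> G" unfolding c0_def G_def using x_not by auto
  have cardG: "card G = 2 * occ12 M" unfolding G_def occ12_O12 Q_def[symmetric] using card_glue[OF fin U Dq] .
  have val: "occ12 (ins n a M) = (if a \<in> G then occ12 M - 1 else if a = c0 then occ12 M + 1 else occ12 M)"
    if a: "a \<in> {1..2*n-1}" for a
  proof -
    have a1: "1 \<le> a" "a \<le> 2*n-1" using a by auto
    define F where "F = {e\<in>Q. fst e \<noteq> a - 1 \<and> snd e \<noteq> a - 1}"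
    have finF: "finite F" unfolding F_def using fin by simp
    have new_iff: "(a - 1, 2*n - 2) \<in> M \<longleftrightarrow> a = c0"
    proof
      assume "(a - 1, 2*n - 2) \<in> M"
      then have "a - 1 = x" using arcs_partner_unique[OF Md _ x(1)] by (simp add: right_diff_distrib')
      then show "a = c0" unfolding c0_def using a1 by simp
    next
      assume "a = c0"
      then have "a - 1 = x" unfolding c0_def by simp
      then show "(a - 1, 2*n - 2) \<in> M" using x(1) by (simp add: right_diff_distrib')
    qed
    have notin: "z \<noteq> (a - 1, 2*n - 1)" if "z \<in> shp a ` F" for z
    proof
      assume zz: "z = (a - 1, 2*n - 1)"
      from that obtain u v where uv: "(u,v) \<in> F" "z = shp a (u,v)" by force
      then have "sh a u = a - 1" using zz unfolding shp_def by simp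
      then have "u = a - 1" by (rule sh_eq_pred[OF a1(1)])
      then show False using uv(1) unfolding F_def by simp
    qed
    have "occ12 (ins n a M) = card (shp a ` F \<union> (if (a - 1, 2*n - 2) \<in> M then {(a - 1, 2*n - 1)} else {}))"
      unfolding occ12_O12 F_def Q_def using O12_ins[OF M n a1] by simp
    also have "\<dots> = card (shp a ` F) + (if (a - 1, 2*n - 2) \<in> M then 1 else 0)"
      by (rule card_new_part) (use finF notin in auto)
    also have "card (shp a ` F) = card F" using card_image[OF inj_on_subset[OF shp_inj, of F]] by simp
    also have "card F = (if a - 1 \<in> fst ` Q \<union> snd ` Q then card Q - 1 else card Q)"
      unfolding F_def by (rule card_filter_touch[OF fin U])
    also have "(a - 1 \<in> fst ` Q \<union> snd ` Q) \<longleftrightarrow> a \<in> G"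
    proof
      assume "a - 1 \<in> fst ` Q \<union> snd ` Q"
      then have "Suc (a - 1) \<in> G" unfolding G_def by blast
      then show "a \<in> G" using a1 by simp
    next
      assume "a \<in> G"
      then obtain y where "y \<in> fst ` Q \<union> snd ` Q" "a = Suc y" unfolding G_def by blast
      then show "a - 1 \<in> fst ` Q \<union> snd ` Q" by simp
    qed
    finally show ?thesis unfolding new_iff occ12_O12 Q_def[symmetric] using c0_not by auto
  qed
  show ?thesis using G_sub c0_in c0_not cardG val by blast
qed


definition O21 :: "(nat \<times> nat) set \<Rightarrow> (nat \<times> nat) set" where
  "O21 M = {(p,q). (p,q+1) \<in> M \<and> (p+1,q) \<in> M}"

lemma occ21_O21: "occ21 M = card (O21 M)"
  unfolding occ21_def O21_def by simp

lemma O21_props: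
  assumes M: "is_matching n M"
  shows "finite (O21 M) \<and> touchU (O21 M) \<and> (\<forall>e1\<in>O21 M. fst e1 \<noteq> snd e1) \<and> fst ` O21 M \<union> snd ` O21 M \<subseteq> {1..2*n}"
proof -
  have Ma: "arcs_ok n M" and Md: "disj_arcs M" using M is_matching_iff by auto
  have sub: "O21 M \<subseteq> fst ` M \<times> snd ` M"
  proof
    fix e assume "e \<in> O21 M"
    then obtain p q where pq: "e = (p,q)" "(p,q+1) \<in> M" "(p+1,q) \<in> M" unfolding O21_def by blast
    then have "p \<in> fst ` M" "q \<in> snd ` M" by force+
    then show "e \<in> fst ` M \<times> snd ` M" using pq by simp
  qed
  have f: "finite (O21 M)" using finite_subset[OF sub] matching_finite[OF M] by blast
  have U: "touchU (O21 M)" unfolding touchU_def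
  proof (intro ballI allI impI)
    fix e1 e2 c assume e1: "e1 \<in> O21 M" and e2: "e2 \<in> O21 M" and t: "fst e1 = c \<or> snd e1 = c" and t': "fst e2 = c \<or> snd e2 = c"
    obtain p q where pq: "e1 = (p,q)" "(p,q+1) \<in> M" "(p+1,q) \<in> M" using e1 unfolding O21_def by blast
    obtain p' q' where pq': "e2 = (p',q')" "(p',q'+1) \<in> M" "(p'+1,q') \<in> M" using e2 unfolding O21_def by blast
    have "p = p' \<and> q = q'"
    proof (cases "p = c")
      case pc: True
      show ?thesis
      proof (cases "p' = c")
        case True
        then have "q + 1 = q' + 1" using arcs_partner_unique2[OF Md pq(2)] pq'(2) pc by simp
        then show ?thesis using pc True by simp
      next
        case False
        then have "q' = c" using t' pq' by simp
        then have "p' + 1 = p \<and> q' = q + 1" using disj_arcsD[OF Md pq'(3) pq(2)] pc by simp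
        then show ?thesis using arcs_okD[OF Ma pq(2)] pc \<open>q' = c\<close> by simp
      qed
    next
      case pc: False
      then have qc: "q = c" using t pq by simp
      show ?thesis
      proof (cases "p' = c")
        case True
        then have "p + 1 = p' \<and> q = q' + 1" using disj_arcsD[OF Md pq(3) pq'(2)] qc by simp
        then show ?thesis using arcs_okD[OF Ma pq'(2)] qc True by simp
      next
        case False
        then have "q' = c" using t' pq' by simp
        then have "p + 1 = p' + 1" using arcs_partner_unique[OF Md pq(3)] pq'(3) qc by simp
        then show ?thesis using qc \<open>q' = c\<close> by simp
      qed
    qed
    then show "e1 = e2" using pq pq' by simp
  qed
  have D: "\<forall>e1\<in>O21 M. fst e1 \<noteq> snd e1"
  proof
    fix e1 assume "e1 \<in> O21 M"
    then obtain p q where pq: "e1 = (p,q)" "(p,q+1) \<in> M" "(p+1,q) \<in> M" unfolding O21_def by blast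
    have "p + 1 < q" using arcs_okD[OF Ma pq(3)] by simp
    then show "fst e1 \<noteq> snd e1" using pq by simp
  qed
  have B: "fst ` O21 M \<union> snd ` O21 M \<subseteq> {1..2*n}"
  proof
    fix z assume "z \<in> fst ` O21 M \<union> snd ` O21 M"
    then obtain e1 where e1: "e1 \<in> O21 M" "z = fst e1 \<or> z = snd e1" by blast
    then obtain p q where pq: "e1 = (p,q)" "(p,q+1) \<in> M" "(p+1,q) \<in> M" unfolding O21_def by blast
    have "1 \<le> p" "p < q + 1" "q + 1 \<le> 2*n" using arcs_okD[OF Ma pq(2)] by auto
    moreover have "p + 1 < q" using arcs_okD[OF Ma pq(3)] by simp
    ultimately show "z \<in> {1..2*n}" using e1(2) pq(1) by auto
  qed
  show ?thesis using f U D B by blast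
qed

lemma occ21_le: "is_matching n M \<Longrightarrow> occ21 M \<le> n"
proof -
  assume M: "is_matching n M"
  note P = O21_props[OF M]
  have "2 * card (O21 M) = card (Suc ` (fst ` O21 M \<union> snd ` O21 M))" using card_glue P by simp
  also have "\<dots> = card (fst ` O21 M \<union> snd ` O21 M)" by (simp add: card_image)
  also have "\<dots> \<le> card {1..2*n}" using P by (intro card_mono) auto
  finally show ?thesis unfolding occ21_O21 by simp
qed

lemma sh_eq_succ: "sh a u = Suc a \<Longrightarrow> u = a"
  unfolding sh_def by (cases "u < a") auto

lemma O21_ins:
  assumes M: "is_matching (n-1) M" and n: "2 \<le> n" and a: "1 \<le> a" "a \<le> 2*n-1"
  shows "O21 (ins n a M) = shp a ` {e\<in>O21 M. fst e \<noteq> a - 1 \<and> snd e \<noteq> a - 1}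
           \<union> (if (a, 2*n - 2) \<in> M then {(a, 2*n - 1)} else {})"
proof -
  have N: "is_matching n (ins n a M)" using ins_matching[OF M _ a] n by simp
  have Na: "arcs_ok n (ins n a M)" using N is_matching_iff by auto
  have Ma: "arcs_ok (n-1) M" using M is_matching_iff by auto
  show ?thesis
  proof
    show "O21 (ins n a M) \<subseteq> shp a ` {e\<in>O21 M. fst e \<noteq> a - 1 \<and> snd e \<noteq> a - 1}
           \<union> (if (a, 2*n - 2) \<in> M then {(a, 2*n - 1)} else {})"
    proof
      fix e assume e: "e \<in> O21 (ins n a M)"
      obtain p q where pq: "e = (p,q)" by force
      have e1: "(p,Suc q) \<in> ins n a M" and e2: "(Suc p, q) \<in> ins n a M" using e pq unfolding O21_def by auto
      show "e \<in> shp a ` {e\<in>O21 M. fst e \<noteq> a - 1 \<and> snd e \<noteq> a - 1}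
           \<union> (if (a, 2*n - 2) \<in> M then {(a, 2*n - 1)} else {})"
      proof (cases "(Suc p, q) = (a, 2*n)")
        case True
        then show ?thesis using arcs_okD[OF Na e1] by auto
      next
        case F1: False
        then obtain u' v where uv': "(u',v) \<in> M" "Suc p = sh a u'" "q = sh a v" using e2 unfolding mem_ins by blast
        show ?thesis
        proof (cases "(p, Suc q) = (a, 2*n)")
          case True
          have "u' = a" using uv'(2) True sh_eq_succ by simp
          moreover have "v = 2*n - 2"
          proof -
            have "v \<le> 2*(n-1)" using arcs_okD[OF Ma uv'(1)] by simp
            then show ?thesis using uv'(3) True a unfolding sh_def by (cases "v < a") auto
          qed
          ultimately have "(a, 2*n - 2) \<in> M" using uv'(1) by simp
          moreover have "e = (a, 2*n - 1)" using True pq by auto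
          ultimately show ?thesis by simp
        next
          case False
          then obtain u v' where uv: "(u,v') \<in> M" "p = sh a u" "Suc q = sh a v'" using e1 unfolding mem_ins by blast
          have "sh a u' = Suc (sh a u)" using uv uv' by simp
          then have "u' = Suc u \<and> u \<noteq> a - 1" by (rule sh_succ[OF a(1)])
          moreover have "sh a v' = Suc (sh a v)" using uv uv' by simp
          then have "v' = Suc v \<and> v \<noteq> a - 1" by (rule sh_succ[OF a(1)])
          ultimately have "(u,v) \<in> {e\<in>O21 M. fst e \<noteq> a - 1 \<and> snd e \<noteq> a - 1}"
            using uv(1) uv'(1) unfolding O21_def by simp
          moreover have "e = shp a (u,v)" using pq uv uv' unfolding shp_def by simp
          ultimately show ?thesis by blast
        qed
      qed
    qed
    show "shp a ` {e\<in>O21 M. fst e \<noteq> a - 1 \<and> snd e \<noteq> a - 1}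
           \<union> (if (a, 2*n - 2) \<in> M then {(a, 2*n - 1)} else {}) \<subseteq> O21 (ins n a M)"
    proof
      fix e assume ee: "e \<in> shp a ` {e\<in>O21 M. fst e \<noteq> a - 1 \<and> snd e \<noteq> a - 1}
           \<union> (if (a, 2*n - 2) \<in> M then {(a, 2*n - 1)} else {})"
      consider u v where "(u,v) \<in> O21 M" "u \<noteq> a - 1" "v \<noteq> a - 1" "e = shp a (u,v)"
        | "(a, 2*n - 2) \<in> M" "e = (a, 2*n - 1)"
      proof -
        assume c1: "\<And>u v. (u,v) \<in> O21 M \<Longrightarrow> u \<noteq> a - 1 \<Longrightarrow> v \<noteq> a - 1 \<Longrightarrow> e = shp a (u,v) \<Longrightarrow> thesis"
          and c2: "(a, 2*n - 2) \<in> M \<Longrightarrow> e = (a, 2*n - 1) \<Longrightarrow> thesis"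
        show thesis
        proof (cases "e \<in> shp a ` {e\<in>O21 M. fst e \<noteq> a - 1 \<and> snd e \<noteq> a - 1}")
          case True
          then obtain x where x: "x \<in> O21 M" "fst x \<noteq> a - 1" "snd x \<noteq> a - 1" "e = shp a x" by blast
          show thesis using c1[of "fst x" "snd x"] x by simp
        next
          case False
          then have "(a, 2*n - 2) \<in> M \<and> e = (a, 2*n - 1)" using ee
            by (simp split: if_splits)
          then show thesis using c2 by blast
        qed
      qed
      then show "e \<in> O21 (ins n a M)"
      proof cases
        case 1
        have "(u,Suc v) \<in> M" "(Suc u, v) \<in> M" using 1(1) unfolding O21_def by auto
        then have "(sh a u, sh a (Suc v)) \<in> ins n a M" "(sh a (Suc u), sh a v) \<in> ins n a M"
          unfolding mem_ins by blast+
        moreover have "sh a (Suc u) = Suc (sh a u)" "sh a (Suc v) = Suc (sh a v)"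
          using sh_Suc[OF a(1)] 1(2,3) by auto
        ultimately show ?thesis using 1(4) unfolding O21_def shp_def by simp
      next
        case 2
        have "a < 2*n - 2" using arcs_okD[OF Ma 2(1)] by simp
        then have "sh a a = Suc a" "sh a (2*n - 2) = 2*n - 1" using a unfolding sh_def by auto
        then have "(Suc a, 2*n - 1) \<in> ins n a M" using 2(1) unfolding mem_ins by (intro disjI2 exI[of _ "a"] exI[of _ "2*n - 2"]) simp
        moreover have "(a, Suc (2*n - 1)) \<in> ins n a M" using a n unfolding ins_def by simp
        ultimately show ?thesis using 2(2) unfolding O21_def by simp
      qed
    qed
  qed
qed

lemma occ21_step:
  assumes M: "is_matching (n-1) M" and n: "2 \<le> n"
  shows "\<exists>G c0. G \<subseteq> {1..2*n-1} \<and> c0 \<in> {1..2*n-1} \<and> c0 \<notin> G \<and> card G = 2 * occ21 M \<and>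
     (\<forall>a\<in>{1..2*n-1}. occ21 (ins n a M) = (if a \<in> G then occ21 M - 1 else if a = c0 then occ21 M + 1 else occ21 M))"
proof -
  define Q where "Q = O21 M"
  define G where "G = Suc ` (fst ` Q \<union> snd ` Q)"
  have Ma: "arcs_ok (n-1) M" and Md: "disj_arcs M" using M is_matching_iff by auto
  note P = O21_props[OF M, folded Q_def]
  have fin: "finite Q" and U: "touchU Q" and Dq: "\<forall>e\<in>Q. fst e \<noteq> snd e" and B: "fst ` Q \<union> snd ` Q \<subseteq> {1..2*(n-1)}"
    using P by auto
  have n1: "1 \<le> n - 1" using n by simp
  obtain x where x: "(x, 2*(n-1)) \<in> M" "1 \<le> x" "x \<le> 2*(n-1) - 1" using matching_last[OF M n1] by blast
  define c0 where "c0 = x"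
  have G_sub: "G \<subseteq> {1..2*n-1}"
  proof
    fix z assume "z \<in> G"
    then obtain y where "y \<in> fst ` Q \<union> snd ` Q" "z = Suc y" unfolding G_def by blast
    then show "z \<in> {1..2*n-1}" using B n by force
  qed
  have c0_in: "c0 \<in> {1..2*n-1}" unfolding c0_def using x n by auto
  have x_not: "x - 1 \<notin> fst ` Q \<union> snd ` Q"
  proof
    assume "x - 1 \<in> fst ` Q \<union> snd ` Q"
    then obtain e where e: "e \<in> Q" "x - 1 = fst e \<or> x - 1 = snd e" by blast
    obtain p q where pq: "e = (p,q)" by force
    have e1: "(p,Suc q) \<in> M" and e2: "(Suc p, q) \<in> M" using e(1) pq unfolding Q_def O21_def by auto
    from e(2) show False
    proof
      assume "x - 1 = fst e"
      then have "Suc p = x" using pq x(2) by simp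
      then have "q = 2*(n-1)" using arcs_partner_unique2[OF Md _ x(1)] e2 by simp
      then show False using arcs_okD[OF Ma e1] by simp
    next
      assume "x - 1 = snd e"
      then have qx: "Suc q = x" using pq x(2) by simp
      then have "p = x \<and> Suc q = 2*(n-1)" using disj_arcsD[OF Md e1 x(1)] by simp
      then show False using arcs_okD[OF Ma e1] qx by simp
    qed
  qed
  have c0_not: "c0 \<notin> G"
  proof
    assume "c0 \<in> G"
    then obtain y where "y \<in> fst ` Q \<union> snd ` Q" "x = Suc y" unfolding G_def c0_def by blast
    then show False using x_not by simp
  qed
  have cardG: "card G = 2 * occ21 M" unfolding G_def occ21_O21 Q_def[symmetric] using card_glue[OF fin U Dq] .
  have val: "occ21 (ins n a M) = (if a \<in> G then occ21 M - 1 else if a = c0 then occ21 M + 1 else occ21 M)"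
    if a: "a \<in> {1..2*n-1}" for a
  proof -
    have a1: "1 \<le> a" "a \<le> 2*n-1" using a by auto
    define F where "F = {e\<in>Q. fst e \<noteq> a - 1 \<and> snd e \<noteq> a - 1}"
    have finF: "finite F" unfolding F_def using fin by simp
    have new_iff: "(a, 2*n - 2) \<in> M \<longleftrightarrow> a = c0"
    proof
      assume "(a, 2*n - 2) \<in> M"
      then have "a = x" using arcs_partner_unique[OF Md _ x(1)] by (simp add: right_diff_distrib')
      then show "a = c0" unfolding c0_def by simp
    next
      assume "a = c0"
      then have "a = x" unfolding c0_def by simp
      then show "(a, 2*n - 2) \<in> M" using x(1) by (simp add: right_diff_distrib')
    qed
    have notin: "z \<noteq> (a, 2*n - 1)" if "z \<in> shp a ` F" for z
    proof
      assume zz: "z = (a, 2*n - 1)"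
      from that obtain u v where uv: "(u,v) \<in> F" "z = shp a (u,v)" by force
      then have "sh a u = a" using zz unfolding shp_def by simp
      then show False using sh_neq by blast
    qed
    have "occ21 (ins n a M) = card (shp a ` F \<union> (if (a, 2*n - 2) \<in> M then {(a, 2*n - 1)} else {}))"
      unfolding occ21_O21 F_def Q_def using O21_ins[OF M n a1] by simp
    also have "\<dots> = card (shp a ` F) + (if (a, 2*n - 2) \<in> M then 1 else 0)"
      by (rule card_new_part) (use finF notin in auto)
    also have "card (shp a ` F) = card F" using card_image[OF inj_on_subset[OF shp_inj, of F]] by simp
    also have "card F = (if a - 1 \<in> fst ` Q \<union> snd ` Q then card Q - 1 else card Q)"
      unfolding F_def by (rule card_filter_touch[OF fin U])
    also have "(a - 1 \<in> fst ` Q \<union> snd ` Q) \<longleftrightarrow> a \<in> G"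
    proof
      assume "a - 1 \<in> fst ` Q \<union> snd ` Q"
      then have "Suc (a - 1) \<in> G" unfolding G_def by blast
      then show "a \<in> G" using a1 by simp
    next
      assume "a \<in> G"
      then obtain y where "y \<in> fst ` Q \<union> snd ` Q" "a = Suc y" unfolding G_def by blast
      then show "a - 1 \<in> fst ` Q \<union> snd ` Q" by simp
    qed
    finally show ?thesis unfolding new_iff occ21_O21 Q_def[symmetric] using c0_not by auto
  qed
  show ?thesis using G_sub c0_in c0_not cardG val by blast
qed


definition good_occ :: "((nat \<times> nat) set \<Rightarrow> nat) \<Rightarrow> bool" where
  "good_occ occ \<longleftrightarrow>
    (\<forall>n M. 2 \<le> n \<longrightarrow> is_matching (n-1) M \<longrightarrow>
      (\<exists>G c0. G \<subseteq> {1..2*n-1} \<and> c0 \<in> {1..2*n-1} \<and> c0 \<notin> G \<and> card G = 2 * occ M \<and>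
        (\<forall>a\<in>{1..2*n-1}. occ (ins n a M) = (if a \<in> G then occ M - 1 else if a = c0 then occ M + 1 else occ M))))
    \<and> occ {(1,2)} = 0 \<and> (\<forall>n M. is_matching n M \<longrightarrow> occ M \<le> n)"

lemma good12: "good_occ occ12"
proof -
  have "O12 {(1,2)} = {}" unfolding O12_def by auto
  then show ?thesis unfolding good_occ_def using occ12_step occ12_le occ12_O12 by auto
qed

lemma good21: "good_occ occ21"
proof -
  have "O21 {(1,2)} = {}" unfolding O21_def by auto
  then show ?thesis unfolding good_occ_def using occ21_step occ21_le occ21_O21 by auto
qed

lemma sum_slots:
  fixes h :: "nat \<Rightarrow> real"
  assumes fin: "finite S" and G: "G \<subseteq> S" and c0: "c0 \<in> S" "c0 \<notin> G" and cG: "card G = 2*m"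
    and v: "\<forall>a\<in>S. v a = (if a \<in> G then m - 1 else if a = c0 then m + 1 else m)"
  shows "(\<Sum>a\<in>S. h (v a)) = 2 * real m * h (m - 1) + h (m + 1) + (real (card S) - 2 * real m - 1) * h m"
proof -
  define R where "R = S - G - {c0}"
  have S: "S = G \<union> ({c0} \<union> R)" unfolding R_def using G c0 by auto
  have finG: "finite G" using finite_subset[OF G fin] .
  have finR: "finite R" unfolding R_def using fin by simp
  have d1: "G \<inter> ({c0} \<union> R) = {}" unfolding R_def using c0 by auto
  have d2: "{c0} \<inter> R = {}" unfolding R_def by auto
  have cR: "card R = card S - 2*m - 1"
  proof -
    have "card S = card G + card ({c0} \<union> R)" unfolding S using card_Un_disjoint[OF finG _ d1] finR by simp
    also have "card ({c0} \<union> R) = 1 + card R" using card_Un_disjoint[OF _ finR d2] by simp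
    finally show ?thesis using cG by simp
  qed
  have cR': "real (card R) = real (card S) - 2 * real m - 1"
  proof -
    have "card S = card G + card ({c0} \<union> R)" unfolding S using card_Un_disjoint[OF finG _ d1] finR by simp
    also have "card ({c0} \<union> R) = 1 + card R" using card_Un_disjoint[OF _ finR d2] by simp
    finally have "card S = 2*m + 1 + card R" using cG by simp
    then show ?thesis by simp
  qed
  have "(\<Sum>a\<in>S. h (v a)) = (\<Sum>a\<in>G. h (v a)) + ((\<Sum>a\<in>{c0}. h (v a)) + (\<Sum>a\<in>R. h (v a)))"
    unfolding S using finG finR d1 d2 by (simp add: sum.union_disjoint)
  also have "(\<Sum>a\<in>G. h (v a)) = (\<Sum>a\<in>G. h (m - 1))"
    by (rule sum.cong) (use v G in auto)
  also have "(\<Sum>a\<in>R. h (v a)) = (\<Sum>a\<in>R. h m)"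
    by (rule sum.cong) (use v in \<open>auto simp: R_def\<close>)
  also have "(\<Sum>a\<in>{c0}. h (v a)) = h (m + 1)" using v c0 by simp
  finally show ?thesis using cG cR' by (simp add: algebra_simps)
qed

lemma absorb_real: "real m * real ((m - 1) choose r) = (real m - real r) * real (m choose r)"
proof (cases "r \<le> m")
  case True
  have "real ((m - r) * (m choose r)) = real (m * ((m - 1) choose r))" using binomial_absorb_comp[of m r] by simp
  then show ?thesis using True by (simp add: of_nat_diff)
next
  case False
  have z1: "m choose r = 0" by (rule binomial_eq_0) (use False in simp)
  have z2: "(m - 1) choose r = 0" by (rule binomial_eq_0) (use False in simp)
  show ?thesis by (simp only: z1 z2)
qed

lemma slot_identity:
  "2 * real m * real ((m - 1) choose r) + real ((m + 1) choose r) + (real (2*n - 1) - 2 * real m - 1) * real (m choose r)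
   = (2 * real n - 1 - 2 * real r) * real (m choose r) + (if r = 0 then 0 else real (m choose (r - 1)))"
  if "1 \<le> n"
proof (cases r)
  case 0
  then show ?thesis using that by (simp add: of_nat_diff)
next
  case (Suc r')
  have "(m + 1) choose r = (m choose r') + (m choose r)" using Suc by simp
  then show ?thesis using absorb_real[of m r] Suc that by (simp add: of_nat_diff algebra_simps)
qed

definition Sf :: "((nat \<times> nat) set \<Rightarrow> nat) \<Rightarrow> nat \<Rightarrow> nat \<Rightarrow> real" where
  "Sf occ n r = (\<Sum>M\<in>matchings n. real (occ M choose r))"

lemma Sf_step:
  assumes g: "good_occ occ" and n: "2 \<le> n"
  shows "Sf occ n r = (2 * real n - 1 - 2 * real r) * Sf occ (n-1) r + (if r = 0 then 0 else Sf occ (n-1) (r-1))"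
proof -
  have inner: "(\<Sum>a\<in>{1..2*n-1}. real (occ (ins n a M) choose r))
      = (2 * real n - 1 - 2 * real r) * real (occ M choose r) + (if r = 0 then 0 else real (occ M choose (r - 1)))"
    if M: "M \<in> matchings (n-1)" for M
  proof -
    have "is_matching (n-1) M" using M unfolding matchings_def by simp
    then obtain G c0 where G: "G \<subseteq> {1..2*n-1}" "c0 \<in> {1..2*n-1}" "c0 \<notin> G" "card G = 2 * occ M"
      and v: "\<forall>a\<in>{1..2*n-1}. occ (ins n a M) = (if a \<in> G then occ M - 1 else if a = c0 then occ M + 1 else occ M)"
      using g n unfolding good_occ_def by blast
    have "(\<Sum>a\<in>{1..2*n-1}. real (occ (ins n a M) choose r))
        = 2 * real (occ M) * real ((occ M - 1) choose r) + real ((occ M + 1) choose r)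
          + (real (card {1..2*n-1}) - 2 * real (occ M) - 1) * real (occ M choose r)"
      by (rule sum_slots[OF _ G v, of "\<lambda>j. real (j choose r)"]) simp
    also have "card {1..2*n-1} = 2*n - 1" by simp
    finally show ?thesis using slot_identity[of n "occ M" r] n by simp
  qed
  have "Sf occ n r = (\<Sum>M\<in>matchings (n-1). \<Sum>a\<in>{1..2*n-1}. real (occ (ins n a M) choose r))"
    unfolding Sf_def using sum_matchings_step[of n] n by simp
  also have "\<dots> = (\<Sum>M\<in>matchings (n-1). (2 * real n - 1 - 2 * real r) * real (occ M choose r) + (if r = 0 then 0 else real (occ M choose (r - 1))))"
    by (rule sum.cong) (use inner in auto)
  also have "\<dots> = (2 * real n - 1 - 2 * real r) * Sf occ (n-1) r + (if r = 0 then 0 else Sf occ (n-1) (r-1))"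
    unfolding Sf_def by (simp add: sum.distrib sum_distrib_left)
  finally show ?thesis .
qed

lemma matchings_0: "matchings 0 = {{}}"
proof -
  have "is_matching 0 M \<longleftrightarrow> M = {}" for M
  proof
    assume "is_matching 0 M"
    then have "arcs_ok 0 M" using is_matching_iff by auto
    then show "M = {}" using arcs_okD by fastforce
  next
    assume "M = {}"
    then show "is_matching 0 M" unfolding is_matching_def by simp
  qed
  then show ?thesis unfolding matchings_def by auto
qed

lemma Sf_1:
  assumes g: "good_occ occ"
  shows "Sf occ 1 r = (if r = 0 then 1 else 0)"
proof -
  have "Sf occ 1 r = (\<Sum>M\<in>matchings 0. \<Sum>a\<in>{1..1}. real (occ (ins 1 a M) choose r))"
    unfolding Sf_def using sum_matchings_step[of 1] by simp
  also have "\<dots> = real (occ (ins 1 1 {}) choose r)" unfolding matchings_0 by simp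
  also have "ins 1 1 {} = {(1,2)}" unfolding ins_def by simp
  finally show ?thesis using g unfolding good_occ_def by simp
qed

lemma odd_dfact_0: "odd_dfact 0 = 1" unfolding odd_dfact_def by simp
lemma odd_dfact_Suc: "odd_dfact (Suc k) = (2*k+1) * odd_dfact k"
  unfolding odd_dfact_def by (simp add: prod.cl_ivl_Suc)
lemma odd_dfact_pos: "odd_dfact k > 0"
  by (induction k) (simp_all add: odd_dfact_0 odd_dfact_Suc)

definition Dr :: "nat \<Rightarrow> real" where "Dr k = real (odd_dfact k)"

lemma Dr_Suc: "Dr (Suc k) = (2 * real k + 1) * Dr k"
  unfolding Dr_def odd_dfact_Suc by (simp add: algebra_simps)
lemma Dr_pos: "Dr k > 0" unfolding Dr_def using odd_dfact_pos by simp

lemma Sf_closed: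
  assumes g: "good_occ occ" and n: "1 \<le> n"
  shows "Sf occ n r = real ((n-1) choose r) * Dr (n - r)"
  using n
proof (induction n arbitrary: r rule: dec_induct)
  case base
  show ?case using Sf_1[OF g] by (simp add: Dr_def odd_dfact_0 odd_dfact_Suc)
next
  case (step m)
  have m1: "2 \<le> Suc m" using step.hyps by simp
  have "Sf occ (Suc m) r = (2 * real (Suc m) - 1 - 2 * real r) * Sf occ m r + (if r = 0 then 0 else Sf occ m (r-1))"
    using Sf_step[OF g m1] by simp
  also have "\<dots> = (2 * real (Suc m) - 1 - 2 * real r) * (real ((m-1) choose r) * Dr (m - r))
      + (if r = 0 then 0 else real ((m-1) choose (r-1)) * Dr (m - (r - 1)))"
    using step.IH by simp
  also have "\<dots> = real (m choose r) * Dr (Suc m - r)"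
  proof (cases "r \<le> m")
    case True
    have D0: "Dr (Suc m - r) = (2 * real (m - r) + 1) * Dr (m - r)"
      using Dr_Suc[of "m - r"] True by (simp add: Suc_diff_le)
    have D: "Dr (Suc m - r) = (2 * real m - 2 * real r + 1) * Dr (m - r)"
      using D0 True by (simp add: of_nat_diff)
    show ?thesis
    proof (cases r)
      case 0
      have e2: "Dr (Suc m) = (2 * real m + 1) * Dr m" by (rule Dr_Suc)
      show ?thesis unfolding 0 using e2 by (simp add: algebra_simps)
    next
      case (Suc r')
      have m_eq: "m = Suc (m - 1)" using step.hyps by simp
      have "m choose r = ((m-1) choose r) + ((m-1) choose r')"
        using Suc by (subst m_eq) simp
      then have e3: "real (m choose r) = real ((m-1) choose r) + real ((m-1) choose (r - 1))" using Suc by simp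
      have e1: "Dr (m - (r - 1)) = Dr (Suc m - r)" using Suc True by (simp add: Suc_diff_le)
      have rn: "r \<noteq> 0" using Suc by simp
      show ?thesis unfolding e1 e3 D using rn by (simp add: algebra_simps)
    qed
  next
    case False
    have z1: "(m-1) choose r = 0" by (rule binomial_eq_0) (use False in simp)
    have z2: "m choose r = 0" by (rule binomial_eq_0) (use False in simp)
    show ?thesis
    proof (cases "r = 0")
      case True then show ?thesis using False by simp
    next
      case r0: False
      have z3: "(m-1) choose (r-1) = 0" by (rule binomial_eq_0) (use False r0 step.hyps in simp)
      show ?thesis using r0 by (simp only: z1 z2 z3) simp
    qed
  qed
  finally show ?case by simp
qed


lemma inv_identity:
  assumes mN: "m \<le> N"
  shows "(\<Sum>r\<le>N. (-1)^(r+k) * real (r choose k) * real (m choose r)) = (if m = k then 1 else 0)"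
proof -
  define f where "f r = (-1)^(r+k) * real (r choose k) * real (m choose r)" for r
  have "(\<Sum>r\<le>N. f r) = (\<Sum>r\<le>m. f r)"
  proof (rule sum.mono_neutral_right)
    show "finite {..N}" by simp
    show "{..m} \<subseteq> {..N}" using mN by auto
    show "\<forall>i\<in>{..N} - {..m}. f i = 0" unfolding f_def by (auto simp: binomial_eq_0)
  qed
  also have "\<dots> = (if m = k then 1 else 0)"
  proof (cases "k \<le> m")
    case False
    have "(\<Sum>r\<le>m. f r) = 0"
      by (rule sum.neutral) (use False in \<open>auto simp: f_def binomial_eq_0\<close>)
    then show ?thesis using False by simp
  next
    case True
    have "(\<Sum>r\<le>m. f r) = (\<Sum>r\<in>{k..m}. f r)"
    proof (rule sum.mono_neutral_right)
      show "finite {..m}" by simp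
      show "{k..m} \<subseteq> {..m}" by auto
      show "\<forall>i\<in>{..m} - {k..m}. f i = 0" unfolding f_def by (auto simp: binomial_eq_0)
    qed
    also have "\<dots> = (\<Sum>j\<in>{0..m-k}. f (j + k))"
      using sum.shift_bounds_cl_nat_ivl[of f 0 k "m - k"] True by simp
    also have "\<dots> = (\<Sum>j\<in>{0..m-k}. real (m choose k) * ((-1)^j * real ((m - k) choose j)))"
    proof (rule sum.cong)
      fix j assume j: "j \<in> {0..m-k}"
      have cm: "(m choose (j + k)) * ((j + k) choose k) = (m choose k) * ((m - k) choose j)"
        using choose_mult[of k "j + k" m] j True by simp
      have "real (m choose (j + k)) * real ((j + k) choose k) = real (m choose k) * real ((m - k) choose j)"
        using cm by (metis of_nat_mult)
      moreover have "(-1::real)^(j + k + k) = (-1)^j"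
        by (simp add: power_add flip: mult_2 power_mult)
      ultimately show "f (j + k) = real (m choose k) * ((-1)^j * real ((m - k) choose j))"
        unfolding f_def by (simp add: algebra_simps)
    qed simp
    also have "\<dots> = real (m choose k) * (\<Sum>j\<le>m-k. (-1)^j * real ((m - k) choose j))"
      by (simp add: sum_distrib_left atLeast0AtMost)
    also have "\<dots> = (if m = k then 1 else 0)"
    proof (cases "m = k")
      case True then show ?thesis by simp
    next
      case False
      then have "m - k > 0" using \<open>k \<le> m\<close> by simp
      then show ?thesis using choose_alternating_sum[of "m - k"] False by simp
    qed
    finally show ?thesis .
  qed
  finally show ?thesis unfolding f_def .
qed

lemma a_inv:
  assumes g: "good_occ occ"
  shows "real (a_nk occ n k) = (\<Sum>r\<le>n. (-1)^(r+k) * real (r choose k) * Sf occ n r)"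
proof -
  have fin: "finite (matchings n)" by (rule matchings_finite)
  have "real (a_nk occ n k) = (\<Sum>M\<in>{M\<in>matchings n. occ M = k}. (1::real))"
    unfolding a_nk_def by simp
  also have "\<dots> = (\<Sum>M\<in>matchings n. if occ M = k then 1 else 0)"
    using sum.inter_filter[OF fin, of "\<lambda>_. (1::real)" "\<lambda>M. occ M = k"] by simp
  also have "\<dots> = (\<Sum>M\<in>matchings n. \<Sum>r\<le>n. (-1)^(r+k) * real (r choose k) * real (occ M choose r))"
  proof (rule sum.cong)
    fix M assume "M \<in> matchings n"
    then have "occ M \<le> n" using g unfolding good_occ_def matchings_def by auto
    then show "(if occ M = k then 1 else 0) = (\<Sum>r\<le>n. (-1)^(r+k) * real (r choose k) * real (occ M choose r))"
      using inv_identity by simp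
  qed simp
  also have "\<dots> = (\<Sum>r\<le>n. \<Sum>M\<in>matchings n. (-1)^(r+k) * real (r choose k) * real (occ M choose r))"
    by (rule sum.swap)
  also have "\<dots> = (\<Sum>r\<le>n. (-1)^(r+k) * real (r choose k) * Sf occ n r)"
    unfolding Sf_def by (simp add: sum_distrib_left)
  finally show ?thesis .
qed


definition T :: "nat \<Rightarrow> nat \<Rightarrow> real" where
  "T n r = real ((n-1) choose r) * Dr (n - r) / Dr n"

definition qf :: "nat \<Rightarrow> nat \<Rightarrow> real" where
  "qf n r = real (n - 1 - r) / (real (Suc r) * real (2*n - 2*r - 1))"

lemma T_0: "T n 0 = 1"
  unfolding T_def using Dr_pos[of n] by simp

lemma T_zero: "n \<le> r \<Longrightarrow> 1 \<le> n \<Longrightarrow> T n r = 0"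
  unfolding T_def by (simp add: binomial_eq_0)

lemma T_Suc:
  assumes n: "1 \<le> n"
  shows "T n (Suc r) = T n r * qf n r"
proof (cases "r < n")
  case False
  then show ?thesis using T_zero[of n r] T_zero[of n "Suc r"] n by simp
next
  case True
  define N where "N = n - 1"
  have c: "real (N choose Suc r) * real (Suc r) = real (N - r) * real (N choose r)"
  proof -
    have "Suc r * (N choose Suc r) = N * ((N - 1) choose r)" by (rule binomial_absorption)
    also have "\<dots> = (N - r) * (N choose r)" by (rule binomial_absorb_comp[symmetric])
    finally have "(N choose Suc r) * Suc r = (N - r) * (N choose r)" by (simp add: mult.commute)
    then show ?thesis by (metis of_nat_mult)
  qed
  have nr: "n - r = Suc (n - Suc r)" using True by simp
  have d: "Dr (n - r) = real (2*n - 2*r - 1) * Dr (n - Suc r)"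
  proof -
    have "Dr (n - r) = (2 * real (n - Suc r) + 1) * Dr (n - Suc r)" unfolding nr by (rule Dr_Suc)
    also have "2 * real (n - Suc r) + 1 = real (2*n - 2*r - 1)" using True by (simp add: of_nat_diff)
    finally show ?thesis .
  qed
  have pos: "real (2*n - 2*r - 1) > 0" using True by simp
  have "T n (Suc r) = real (N choose Suc r) * Dr (n - Suc r) / Dr n" unfolding T_def N_def by simp
  also have "\<dots> = (real (N - r) * real (N choose r) / real (Suc r)) * (Dr (n - r) / real (2*n - 2*r - 1)) / Dr n"
  proof -
    have "real (N choose Suc r) = real (N - r) * real (N choose r) / real (Suc r)" using c by (simp add: field_simps)
    moreover have "Dr (n - Suc r) = Dr (n - r) / real (2*n - 2*r - 1)" using d pos by (simp add: field_simps)
    ultimately show ?thesis by simp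
  qed
  also have "\<dots> = T n r * qf n r" unfolding T_def qf_def N_def by (simp add: field_simps)
  finally show ?thesis .
qed

lemma qf_bounds: "0 \<le> qf n r \<and> qf n r \<le> 1 / (2 * real (Suc r))"
proof (cases "r + 1 < n")
  case False
  then have "n - 1 - r = 0" by simp
  then show ?thesis unfolding qf_def by simp
next
  case True
  have den: "real (2*n - 2*r - 1) > 0" using True by simp
  have "2 * real (n - 1 - r) \<le> real (2*n - 2*r - 1)" using True by (simp add: of_nat_diff)
  then have "real (n - 1 - r) / real (2*n - 2*r - 1) \<le> 1 / 2" using den by (simp add: field_simps)
  then have "real (n - 1 - r) / real (2*n - 2*r - 1) / real (Suc r) \<le> (1 / 2) / real (Suc r)"
    by (intro divide_right_mono) auto
  then have "qf n r \<le> 1 / (2 * real (Suc r))" unfolding qf_def by (simp add: field_simps)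
  moreover have "0 \<le> qf n r" unfolding qf_def by simp
  ultimately show ?thesis by simp
qed

lemma div_cancel_aux: fixes x n z :: real assumes "n \<noteq> 0" shows "(x / n) / (z / n) = x / z"
  using assms by (cases "z = 0") (simp_all add: field_simps)

lemma qf_lim: "(\<lambda>n. qf n r) \<longlonglongrightarrow> 1 / (2 * real (Suc r))"
proof -
  define c where "c = real r"
  have ev: "eventually (\<lambda>n. (1 - (1 + c) / real n) / (real (Suc r) * (2 - (2 * c + 1) / real n)) = qf n r) sequentially"
    using eventually_ge_at_top[of "r + 2"]
  proof eventually_elim
    case (elim n)
    have n0: "real n > 0" using elim by simp
    have a1: "real (n - 1 - r) = real n - 1 - c" using elim unfolding c_def by (simp add: of_nat_diff)
    have a2: "real (2*n - 2*r - 1) = 2 * real n - 2 * c - 1" using elim unfolding c_def by (simp add: of_nat_diff)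
    have a3: "2 * real n - 2 * c - 1 > 0" using elim unfolding c_def by simp
    have h1: "1 - (1 + c) / real n = (real n - 1 - c) / real n" using n0 by (simp add: field_simps)
    have h2: "2 - (2 * c + 1) / real n = (2 * real n - 2 * c - 1) / real n" using n0 by (simp add: field_simps)
    have R: "real (Suc r) > 0" by simp
    have "(1 - (1 + c) / real n) / (real (Suc r) * (2 - (2 * c + 1) / real n))
        = ((real n - 1 - c) / real n) / (real (Suc r) * ((2 * real n - 2 * c - 1) / real n))"
      unfolding h1 h2 ..
    also have "\<dots> = ((real n - 1 - c) / real n) / ((real (Suc r) * (2 * real n - 2 * c - 1)) / real n)"
      by simp
    also have "\<dots> = (real n - 1 - c) / (real (Suc r) * (2 * real n - 2 * c - 1))"
      using n0 by (intro div_cancel_aux) simp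
    finally show ?case unfolding qf_def a1 a2 .
  qed
  have "(\<lambda>n. (1 - (1 + c) / real n) / (real (Suc r) * (2 - (2 * c + 1) / real n)))
        \<longlonglongrightarrow> (1 - 0) / (real (Suc r) * (2 - 0))"
    by (intro tendsto_intros) auto
  then have "(\<lambda>n. (1 - (1 + c) / real n) / (real (Suc r) * (2 - (2 * c + 1) / real n)))
        \<longlonglongrightarrow> 1 / (2 * real (Suc r))" by (simp add: mult.commute)
  then show ?thesis using ev by (rule Lim_transform_eventually)
qed

lemma T_props:
  "(\<lambda>n. T n r) \<longlonglongrightarrow> 1 / (2^r * fact r) \<and> (\<forall>n\<ge>1. 0 \<le> T n r \<and> T n r \<le> 1 / (2^r * fact r))"
proof (induction r)
  case 0
  show ?case using T_0 by simp
next
  case (Suc r)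
  have L: "(\<lambda>n. T n r * qf n r) \<longlonglongrightarrow> 1 / (2^r * fact r) * (1 / (2 * real (Suc r)))"
    using Suc.IH qf_lim by (intro tendsto_mult) auto
  have e: "1 / (2^r * fact r) * (1 / (2 * real (Suc r))) = (1 / (2^Suc r * fact (Suc r)) :: real)"
    by (simp add: field_simps)
  have ev: "eventually (\<lambda>n. T n r * qf n r = T n (Suc r)) sequentially"
    using eventually_ge_at_top[of 1] by eventually_elim (simp add: T_Suc)
  have L2: "(\<lambda>n. T n (Suc r)) \<longlonglongrightarrow> 1 / (2^Suc r * fact (Suc r))"
    using Lim_transform_eventually[OF L[unfolded e] ev] .
  have B: "0 \<le> T n (Suc r) \<and> T n (Suc r) \<le> 1 / (2^Suc r * fact (Suc r))" if n: "n \<ge> 1" for n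
  proof -
    have b1: "0 \<le> T n r" "T n r \<le> 1 / (2^r * fact r)" using Suc.IH n by auto
    have b2: "0 \<le> qf n r" "qf n r \<le> 1 / (2 * real (Suc r))" using qf_bounds by auto
    have "T n (Suc r) = T n r * qf n r" by (rule T_Suc[OF n])
    also have "\<dots> \<le> 1 / (2^r * fact r) * (1 / (2 * real (Suc r)))"
      using b1 b2 by (intro mult_mono) auto
    also have "\<dots> = 1 / (2^Suc r * fact (Suc r))" by (rule e)
    finally have u: "T n (Suc r) \<le> 1 / (2^Suc r * fact (Suc r))" .
    have "0 \<le> T n r * qf n r" using b1 b2 by simp
    then show ?thesis using u T_Suc[OF n] by simp
  qed
  show ?case using L2 B by blast
qed


lemma p_formula:
  assumes g: "good_occ occ" and n: "1 \<le> n"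
  shows "real (a_nk occ n k) / real (odd_dfact n) = (\<Sum>r\<le>n. (-1)^(r+k) * real (r choose k) * T n r)"
proof -
  have "real (a_nk occ n k) / real (odd_dfact n) = (\<Sum>r\<le>n. (-1)^(r+k) * real (r choose k) * Sf occ n r) / Dr n"
    unfolding a_inv[OF g] Dr_def ..
  also have "\<dots> = (\<Sum>r\<le>n. (-1)^(r+k) * real (r choose k) * Sf occ n r / Dr n)"
    by (rule sum_divide_distrib)
  also have "\<dots> = (\<Sum>r\<le>n. (-1)^(r+k) * real (r choose k) * T n r)"
    by (rule sum.cong) (simp_all add: Sf_closed[OF g n] T_def)
  finally show ?thesis .
qed

lemma limit_b:
  "(\<lambda>r. (-1)^(r+k) * real (r choose k) * (1 / (2^r * fact r))) sums (exp (-1/2) / (2^k * fact k))"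
proof -
  define c :: real where "c = 1 / (2^k * fact k)"
  define x :: real where "x = -1/2"
  define b where "b r = (-1)^(r+k) * real (r choose k) * (1 / (2^r * fact r) :: real)" for r
  have E: "(\<lambda>j. x^j /\<^sub>R fact j) sums exp x" by (rule exp_converges)
  have E1: "(\<lambda>j. inverse (fact j) * x^j) sums exp x" using E by (simp only: real_scaleR_def)
  have xp: "x^j = (-1)^j / 2^j" for j unfolding x_def by (rule power_divide)
  have E2: "(\<lambda>j. c * (inverse (fact j) * ((-1)^j / 2^j))) sums (c * exp x)"
    using sums_mult[OF E1, of c] unfolding xp .
  have pw: "b (j + k) = c * (inverse (fact j) * ((-1)^j / 2^j))" for j
  proof -
    have bf: "real ((j + k) choose k) = fact (j + k) / (fact k * fact j)"
      using binomial_fact[of k "j + k", where 'a=real] by simp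
    have sg: "(-1::real)^(j + k + k) = (-1)^j" by (simp add: power_add flip: mult_2 power_mult)
    have fpos: "(fact (j + k) :: real) > 0" "(fact k :: real) > 0" "(fact j :: real) > 0" by simp_all
    have "b (j + k) = (-1)^j * (fact (j + k) / (fact k * fact j)) * (1 / (2^(j+k) * fact (j + k)))"
      unfolding b_def bf sg by simp
    also have "\<dots> = (-1)^j / (2^j * fact j) * c"
      unfolding c_def using fpos by (simp add: field_simps power_add)
    also have "\<dots> = c * (inverse (fact j) * ((-1)^j / 2^j))"
      using fpos by (simp add: field_simps)
    finally show ?thesis .
  qed
  have "(\<lambda>j. b (j + k)) sums (c * exp x)" using E2 pw by simp
  moreover have "\<And>i. i < k \<Longrightarrow> b i = 0" unfolding b_def by (simp add: binomial_eq_0)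
  ultimately have "b sums (c * exp x)" using sums_zero_iff_shift[of k b] by simp
  moreover have "c * exp x = exp (-1/2) / (2^k * fact k)" unfolding c_def x_def by simp
  ultimately show ?thesis unfolding b_def by simp
qed

lemma main_lim:
  assumes g: "good_occ occ"
  shows "(\<lambda>n. real (a_nk occ n k) / real (odd_dfact n)) \<longlonglongrightarrow> exp (-1/2) / (2^k * fact k)"
proof -
  define a where "a r n = (-1)^(r+k) * real (r choose k) * T n r" for r n
  define b where "b r = (-1)^(r+k) * real (r choose k) * (1 / (2^r * fact r) :: real)" for r
  define Mb where "Mb r = inverse (fact r) * (1::real)^r" for r
  have lim: "\<And>r. (\<lambda>n. a r n) \<longlonglongrightarrow> b r"
    unfolding a_def b_def using T_props by (intro tendsto_intros) auto
  have bnd1: "norm (a r n) \<le> Mb r" if "n \<ge> 1" for r n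
  proof -
    have t: "0 \<le> T n r" "T n r \<le> 1 / (2^r * fact r)" using T_props that by auto
    have "norm (a r n) = real (r choose k) * T n r" unfolding a_def using t by (simp add: abs_mult)
    also have "\<dots> \<le> 2^r * (1 / (2^r * fact r))"
    proof (rule mult_mono)
      show "real (r choose k) \<le> 2^r" using binomial_le_pow2[of r k] by (metis of_nat_le_iff of_nat_numeral of_nat_power)
    qed (use t in auto)
    also have "\<dots> = Mb r" unfolding Mb_def by (simp add: field_simps)
    finally show ?thesis .
  qed
  have bnd: "eventually (\<lambda>(r,n). norm (a r n) \<le> Mb r) (at_top \<times>\<^sub>F sequentially)"
    unfolding eventually_prod_filter
    by (intro exI[of _ "\<lambda>_. True"] exI[of _ "\<lambda>n. n \<ge> 1"]) (use bnd1 in auto)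
  have sM: "summable Mb" unfolding Mb_def by (rule summable_exp)
  have T1: "((\<lambda>n. suminf (\<lambda>r. a r n)) \<longlongrightarrow> suminf b) sequentially"
    using tannerys_theorem[OF lim bnd sM] by simp
  have sb: "suminf b = exp (-1/2) / (2^k * fact k)" using limit_b[of k] unfolding b_def by (rule sums_unique[symmetric])
  have ev: "eventually (\<lambda>n. suminf (\<lambda>r. a r n) = real (a_nk occ n k) / real (odd_dfact n)) sequentially"
    using eventually_ge_at_top[of 1]
  proof eventually_elim
    case (elim n)
    have "(\<lambda>r. a r n) sums (\<Sum>r\<in>{..n}. a r n)"
    proof (rule sums_finite)
      fix r assume "r \<notin> {..n}"
      then have "T n r = 0" using T_zero[of n r] elim by simp
      then show "a r n = 0" unfolding a_def by simp
    qed simp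
    then have "suminf (\<lambda>r. a r n) = (\<Sum>r\<le>n. a r n)" by (simp add: sums_iff)
    also have "\<dots> = real (a_nk occ n k) / real (odd_dfact n)" unfolding a_def using p_formula[OF g elim] by simp
    finally show ?case .
  qed
  show ?thesis using Lim_transform_eventually[OF T1[unfolded sb] ev] .
qed

theorem corollary4:
  fixes k :: nat
  shows "((\<lambda>n. real (a_nk occ21 n k) / real (odd_dfact n))
            \<longlonglongrightarrow> exp (-1/2) / (2^k * fact k))
       \<and> ((\<lambda>n. real (a_nk occ12 n k) / real (odd_dfact n))
            \<longlonglongrightarrow> exp (-1/2) / (2^k * fact k))"
  using main_lim[OF good21] main_lim[OF good12] by blast

end
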